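(* Let $(\mathcal{N}, +, <)$ be a set $\mathcal{N} \supseteq \mathbb{N}$ with a binary operation $+$ extending addition on $\mathbb{N}$ and a strict total order $<$ extending the usual order on $\mathbb{N}$ (write $x \leq y$ for $x<y$ or $x=y$). Let $\mathrm{num}: \mathcal{P}(\mathbb{N}) \to \mathcal{N}$ satisfy: (Unit) $\mathrm{num}(\{n\}) = 1$ for all $n \in \mathbb{N}$; (Additivity) if $S \cap T = \emptyset$ then $\mathrm{num}(S \cup T) = \mathrm{num}(S) + \mathrm{num}(T)$; (Finite approximation) if $f_n(S) \leq f_n(T)$ for all $n \in \mathbb{N}$ then $\mathrm{num}(S) \leq \mathrm{num}(T)$; (Euclidean principle) if $S \subsetneq T$ then $\mathrm{num}(S) < \mathrm{num}(T)$. Then: (a) $\mathrm{num}(F) = |F|$ for every finite nonempty $F \subseteq \mathbb{N}$; (b) for nonempty $S \subseteq \mathbb{N}$, $\mathrm{num}(S) \in \mathbb{N}$ if and only if $S$ is finite; (c) $\mathrm{num}(\mathbb{N}) \notin \mathbb{N}$ and $\mathrm{num}(S) < \mathrm{num}(\mathbb{N})$ for every $S \subsetneq \mathbb{N}$; (d) for all $S, T \subseteq \mathbb{N}$, if $\mathrm{num}(S) = \mathrm{num}(T)$ then $|S| = |T|$; (e) there exist $S, T \subseteq \mathbb{N}$ with $|S| = |T|$ but $\mathrm{num}(S) \neq \mathrm{num}(T)$.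
   Context: $\mathbb{N} = \{1,2,3,\ldots\}$, $\mathcal{P}(\mathbb{N})$ is its power set, and for $S \subseteq \mathbb{N}$, $f_n(S) = |S \cap \{1,\ldots,n\}|$. $|S|$ denotes cardinality. *)

theory Defs
  imports Main
begin

text \<open>The positive naturals \<open>\<nat> = {1,2,3,...}\<close> of the paper.\<close>
definition Npos :: "nat set" where
  "Npos = {n. 1 \<le> n}"

definition fcount :: "nat \<Rightarrow> nat set \<Rightarrow> nat" where
  "fcount n S = card (S \<inter> {1..n})"

end

theory Submission
  imports Defs "HOL-Library.Infinite_Set"
begin

lemma inf_bij:
  fixes S T :: "nat set"
  assumes "infinite S" "infinite T"
  shows "\<exists>f. bij_betw f S T"
proof -
  have a: "bij_betw (enumerate S) UNIV S" using assms(1) by (rule bij_enumerate)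
  have b: "bij_betw (enumerate T) UNIV T" using assms(2) by (rule bij_enumerate)
  have "bij_betw (enumerate T \<circ> inv_into UNIV (enumerate S)) S T"
    using bij_betw_trans[OF bij_betw_inv_into[OF a] b] .
  then show ?thesis by blast
qed

theorem mainTheorem4:
  fixes emb :: "nat \<Rightarrow> 'a"
    and plus :: "'a \<Rightarrow> 'a \<Rightarrow> 'a"
    and less :: "'a \<Rightarrow> 'a \<Rightarrow> bool"
    and num :: "nat set \<Rightarrow> 'a"
  assumes emb_inj: "inj_on emb Npos"
    and emb_plus: "\<And>m n. m \<in> Npos \<Longrightarrow> n \<in> Npos \<Longrightarrow> plus (emb m) (emb n) = emb (m + n)"
    and less_irrefl: "\<And>x. \<not> less x x"
    and less_trans: "\<And>x y z. less x y \<Longrightarrow> less y z \<Longrightarrow> less x z"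
    and less_total: "\<And>x y. x \<noteq> y \<Longrightarrow> less x y \<or> less y x"
    and emb_less: "\<And>m n. m \<in> Npos \<Longrightarrow> n \<in> Npos \<Longrightarrow> less (emb m) (emb n) \<longleftrightarrow> m < n"
    and unit: "\<And>n. n \<in> Npos \<Longrightarrow> num {n} = emb 1"
    and additivity: "\<And>S T. S \<subseteq> Npos \<Longrightarrow> T \<subseteq> Npos \<Longrightarrow> S \<inter> T = {} \<Longrightarrow>
                        num (S \<union> T) = plus (num S) (num T)"
    and finite_approx: "\<And>S T. S \<subseteq> Npos \<Longrightarrow> T \<subseteq> Npos \<Longrightarrow>
                        (\<forall>n\<in>Npos. fcount n S \<le> fcount n T) \<Longrightarrow>
                        (less (num S) (num T) \<or> num S = num T)"
    and euclid: "\<And>S T. S \<subseteq> Npos \<Longrightarrow> T \<subseteq> Npos \<Longrightarrow> S \<subset> T \<Longrightarrow> less (num S) (num T)"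
  shows "(\<forall>F. F \<subseteq> Npos \<and> finite F \<and> F \<noteq> {} \<longrightarrow> num F = emb (card F))
       \<and> (\<forall>S. S \<subseteq> Npos \<and> S \<noteq> {} \<longrightarrow> (num S \<in> emb ` Npos \<longleftrightarrow> finite S))
       \<and> (num Npos \<notin> emb ` Npos \<and> (\<forall>S. S \<subset> Npos \<longrightarrow> less (num S) (num Npos)))
       \<and> (\<forall>S T. S \<subseteq> Npos \<and> T \<subseteq> Npos \<and> num S = num T \<longrightarrow> (\<exists>f. bij_betw f S T))
       \<and> (\<exists>S T. S \<subseteq> Npos \<and> T \<subseteq> Npos \<and> (\<exists>f. bij_betw f S T) \<and> num S \<noteq> num T)"
proof -
  have A: "num F = emb (card F)" if "F \<subseteq> Npos" "finite F" "F \<noteq> {}" for F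
    using that(2,3,1)
  proof (induction F rule: finite_ne_induct)
    case (singleton x) then show ?case using unit by simp
  next
    case (insert x F)
    have "num (insert x F) = num ({x} \<union> F)" by simp
    also have "\<dots> = plus (num {x}) (num F)"
      using insert by (intro additivity) auto
    also have "\<dots> = plus (emb 1) (emb (card F))" using insert unit by auto
    also have "\<dots> = emb (1 + card F)"
      using insert by (intro emb_plus) (auto simp: Npos_def card_gt_0_iff Suc_le_eq)
    finally show ?case using insert by simp
  qed
  have B: "num S \<notin> emb ` Npos" if hS: "S \<subseteq> Npos" "infinite S" for S
  proof
    assume "num S \<in> emb ` Npos"
    then obtain m where m: "m \<in> Npos" "num S = emb m" by auto
    obtain F where F: "F \<subseteq> S" "finite F" "card F = m + 1"
      using infinite_arbitrarily_large[OF hS(2)] by blast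
    have "F \<noteq> {}" using F by auto
    have "F \<subset> S" using F hS(2) by auto
    hence "less (num F) (num S)" using F hS by (intro euclid) auto
    moreover have "num F = emb (m+1)" using A[of F] F hS \<open>F \<noteq> {}\<close> by auto
    ultimately have "less (emb (m+1)) (emb m)" using m by simp
    moreover have "m + 1 \<in> Npos" by (simp add: Npos_def)
    ultimately show False using emb_less m by auto
  qed
  have infN: "infinite Npos"
  proof
    assume "finite Npos"
    then have "Suc (Max Npos) \<in> Npos \<Longrightarrow> Suc (Max Npos) \<le> Max Npos" by (rule Max_ge)
    then show False by (simp add: Npos_def)
  qed
  have D: "\<exists>f. bij_betw f S T" if "S \<subseteq> Npos" "T \<subseteq> Npos" "num S = num T" for S T
  proof (cases "S = {}")
    case True
    show ?thesis
    proof (cases "T = {}")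
      case True then show ?thesis using \<open>S = {}\<close> by auto
    next
      case False
      then have "less (num S) (num T)" using True that by (intro euclid) auto
      then show ?thesis using that less_irrefl by simp
    qed
  next
    case Sne: False
    show ?thesis
    proof (cases "T = {}")
      case True
      then have "less (num T) (num S)" using Sne that by (intro euclid) auto
      then show ?thesis using that less_irrefl by simp
    next
      case Tne: False
      show ?thesis
      proof (cases "finite S")
        case True
        have cS: "card S \<in> Npos" using True Sne by (simp add: Npos_def card_gt_0_iff Suc_le_eq)
        have nS: "num S = emb (card S)" using A True Sne that by auto
        have fT: "finite T" using B[of T] that nS cS by (metis image_eqI)
        have cT: "card T \<in> Npos" using fT Tne by (simp add: Npos_def card_gt_0_iff Suc_le_eq)
        have "num T = emb (card T)" using A fT Tne that by auto
        then have "card S = card T" using nS that emb_inj cS cT by (auto dest: inj_onD)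
        then show ?thesis using bij_betw_iff_card True fT by blast
      next
        case False
        have "infinite T"
        proof
          assume fT: "finite T"
          have cT: "card T \<in> Npos" using fT Tne by (simp add: Npos_def card_gt_0_iff Suc_le_eq)
          have "num T = emb (card T)" using A fT Tne that by auto
          then show False using B[of S] False that cT by auto
        qed
        then show ?thesis using inf_bij False by blast
      qed
    qed
  qed
  have E: "\<exists>S T. S \<subseteq> Npos \<and> T \<subseteq> Npos \<and> (\<exists>f. bij_betw f S T) \<and> num S \<noteq> num T"
  proof -
    have "bij_betw Suc Npos (Npos - {1})"
      unfolding bij_betw_def Npos_def
      by (auto simp: image_iff intro!: exI[of _ "x - 1" for x]) (metis Suc_pred' not_less_eq_eq le_0_eq le_numeral_extra(4) Suc_le_eq)
    moreover have "less (num (Npos - {1})) (num Npos)"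
      by (intro euclid) (auto simp: Npos_def)
    ultimately show ?thesis using less_irrefl
      by (metis Diff_subset order_refl)
  qed
  show ?thesis
  proof (intro conjI allI impI)
    fix F assume "F \<subseteq> Npos \<and> finite F \<and> F \<noteq> {}"
    then show "num F = emb (card F)" using A by blast
  next
    fix S assume S: "S \<subseteq> Npos \<and> S \<noteq> {}"
    show "num S \<in> emb ` Npos \<longleftrightarrow> finite S"
    proof
      assume "num S \<in> emb ` Npos" then show "finite S" using B S by blast
    next
      assume f: "finite S"
      have "card S \<in> Npos" using f S by (simp add: Npos_def card_gt_0_iff Suc_le_eq)
      then show "num S \<in> emb ` Npos" using A f S by auto
    qed
  next
    show "num Npos \<notin> emb ` Npos" using B infN by simp
  next
    fix S assume "S \<subset> Npos" then show "less (num S) (num Npos)" by (intro euclid) auto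
  next
    fix S T assume "S \<subseteq> Npos \<and> T \<subseteq> Npos \<and> num S = num T"
    then show "\<exists>f. bij_betw f S T" using D by blast
  next
    show "\<exists>S T. S \<subseteq> Npos \<and> T \<subseteq> Npos \<and> (\<exists>f. bij_betw f S T) \<and> num S \<noteq> num T" by (rule E)
  qed
qed

end
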